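(* Let $w=w_1\cdots w_n$ be a word of length $n\ge 2$ with $w_i\ne w_{n-i+1}$ for some $i$. Then for every positive integer $d$, $f(w,d)\le \frac14\left((n+2)^d-(n-2)^d\right)$.
   Context: Let $[n]=\{1,\dots,n\}$, $n\ge 2$, $d\ge 1$. For $p\in[n]^d$ and $v\in\{-1,0,1\}^d$ with $v\ne\vec 0$, if $p+tv\in[n]^d$ for all $0\le t\le n-1$, the set $\ell=\{p,p+v,\dots,p+(n-1)v\}$ is called a line (with initial point $p$ and direction $v$). Each line has a unique representation $(p;v)$ in which the first nonzero coordinate of $v$ is $+1$ (its canonical pair); for such a representation write $\ell_i=p+(i-1)v$ for $1\le i\le n$. An $(n,d)$-grid is a function $G:[n]^d\to\Sigma$ for an arbitrary set of letters $\Sigma$. For a word $w=w_1\cdots w_n$, a line $\ell$ contains $w$ if $G(\ell_1)G(\ell_2)\cdots G(\ell_n)=w$ or $G(\ell_n)\cdots G(\ell_1)=w$. $f(w,G)$ is the number of lines of $[n]^d$ containing $w$, and $f(w,d)=\max_G f(w,G)$ over all $(n,d)$-grids $G$. *)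

theory Defs
  imports Complex_Main
begin

definition grid_pts :: "nat \<Rightarrow> nat \<Rightarrow> int list set" where
  "grid_pts n d = {p. length p = d \<and> (\<forall>x\<in>set p. 1 \<le> x \<and> x \<le> int n)}"

definition shift :: "int list \<Rightarrow> int list \<Rightarrow> int \<Rightarrow> int list" where
  "shift p v t = map2 (\<lambda>a b. a + t * b) p v"

definition is_dir :: "nat \<Rightarrow> int list \<Rightarrow> bool" where
  "is_dir d v \<longleftrightarrow> length v = d \<and> (\<forall>x\<in>set v. x \<in> {-1,0,1}) \<and> (\<exists>x\<in>set v. x \<noteq> 0)"

definition canonical_dir :: "int list \<Rightarrow> bool" where
  "canonical_dir v \<longleftrightarrow> hd (dropWhile (\<lambda>x. x = 0) v) = 1"

definition line_pair :: "nat \<Rightarrow> nat \<Rightarrow> int list \<Rightarrow> int list \<Rightarrow> bool" where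
  "line_pair n d p v \<longleftrightarrow> p \<in> grid_pts n d \<and> is_dir d v \<and>
     (\<forall>t::nat. t \<le> n - 1 \<longrightarrow> shift p v (int t) \<in> grid_pts n d)"

definition line_set :: "nat \<Rightarrow> int list \<Rightarrow> int list \<Rightarrow> int list set" where
  "line_set n p v = {shift p v (int t) | t. t \<le> n - 1}"

definition is_line :: "nat \<Rightarrow> nat \<Rightarrow> int list set \<Rightarrow> bool" where
  "is_line n d L \<longleftrightarrow> (\<exists>p v. line_pair n d p v \<and> L = line_set n p v)"

text \<open>Here l_i = p + (i-1)v, i.e. index i-1 in 0-based form.\<close>
definition line_contains ::
    "nat \<Rightarrow> nat \<Rightarrow> (int list \<Rightarrow> 'a) \<Rightarrow> 'a list \<Rightarrow> int list set \<Rightarrow> bool" where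
  "line_contains n d G w L \<longleftrightarrow> (\<exists>p v. line_pair n d p v \<and> canonical_dir v \<and> L = line_set n p v \<and>
     ((\<forall>i<n. G (shift p v (int i)) = w ! i) \<or>
      (\<forall>i<n. G (shift p v (int (n - 1 - i))) = w ! i)))"

definition f_grid :: "'a list \<Rightarrow> nat \<Rightarrow> (int list \<Rightarrow> 'a) \<Rightarrow> nat" where
  "f_grid w d G = card {L. is_line (length w) d L \<and> line_contains (length w) d G w L}"

text \<open>f(w,d) = max over all grids G (letters of the same type as w; values of G outside
  the grid are irrelevant).\<close>
definition f_max :: "'a list \<Rightarrow> nat \<Rightarrow> nat" where
  "f_max w d = Sup {f_grid w d G | G. True}"

end

theory Submission
  imports Defs
begin


definition rr :: "int \<Rightarrow> int \<Rightarrow> int \<Rightarrow> int" where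
  "rr c1 c2 z = (if z = c2 then c1 else z)"

lemma grid_alt: "grid_pts n d = {x. set x \<subseteq> {1..int n} \<and> length x = d}"
  unfolding grid_pts_def by auto

lemma finite_grid: "finite (grid_pts n d)"
  unfolding grid_alt by (rule finite_lists_length_eq) simp

lemma grid_nth: "x \<in> grid_pts n d \<longleftrightarrow> length x = d \<and> (\<forall>j<d. 1 \<le> x!j \<and> x!j \<le> int n)"
  unfolding grid_pts_def by (auto simp: all_set_conv_all_nth)

lemma card_compat:
  assumes c: "1 \<le> c1" "c1 \<le> int n" "1 \<le> c2" "c2 \<le> int n" "c1 \<noteq> c2"
  shows "card {(x,y). x \<in> grid_pts n d \<and> y \<in> grid_pts n d \<and> map (rr c1 c2) x = map (rr c1 c2) y} = (n+2)^d"
proof -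
  define S where "S = {(a,b). a \<in> {1..int n} \<and> b \<in> {1..int n} \<and> rr c1 c2 a = rr c1 c2 b}"
  have S_eq: "S = (\<lambda>a. (a,a)) ` {1..int n} \<union> {(c1,c2),(c2,c1)}"
  proof (rule set_eqI)
    fix z :: "int \<times> int"
    obtain a b where z: "z = (a,b)" by fastforce
    show "z \<in> S \<longleftrightarrow> z \<in> (\<lambda>a. (a,a)) ` {1..int n} \<union> {(c1,c2),(c2,c1)}"
    proof (cases "a = b")
      case True
      then show ?thesis using c unfolding S_def z by auto
    next
      case False
      have "rr c1 c2 a = rr c1 c2 b \<longleftrightarrow> (a = c1 \<and> b = c2) \<or> (a = c2 \<and> b = c1)"
        using False c(5) unfolding rr_def by auto
      moreover have "z \<notin> (\<lambda>a. (a,a)) ` {1..int n}" using False z by auto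
      ultimately show ?thesis using c unfolding S_def z by auto
    qed
  qed
  have cS: "card S = n + 2"
  proof -
    have "card ((\<lambda>a. (a,a)) ` {1..int n}) = n" by (subst card_image) (auto simp: inj_on_def)
    moreover have "card {(c1,c2),(c2,c1)} = 2" using c by auto
    moreover have "(\<lambda>a. (a,a)) ` {1..int n} \<inter> {(c1,c2),(c2,c1)} = {}" using c by auto
    ultimately show ?thesis unfolding S_eq by (subst card_Un_disjoint) auto
  qed
  have fin: "finite S" unfolding S_eq by auto
  define F where "F = (\<lambda>zs::(int\<times>int) list. (map fst zs, map snd zs))"
  have inj: "inj_on F {zs. set zs \<subseteq> S \<and> length zs = d}"
    unfolding inj_on_def F_def
  proof (intro ballI impI)
    fix xs ys :: "(int \<times> int) list"
    assume "(map fst xs, map snd xs) = (map fst ys, map snd ys)"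
    then have "map fst xs = map fst ys" "map snd xs = map snd ys" by auto
    then show "xs = ys" by (metis zip_map_fst_snd)
  qed
  have img: "F ` {zs. set zs \<subseteq> S \<and> length zs = d} = {(x,y). x \<in> grid_pts n d \<and> y \<in> grid_pts n d \<and> map (rr c1 c2) x = map (rr c1 c2) y}"
  proof (rule set_eqI, rule iffI)
    fix xy assume "xy \<in> F ` {zs. set zs \<subseteq> S \<and> length zs = d}"
    then obtain zs where zs: "set zs \<subseteq> S" "length zs = d" "xy = F zs" by auto
    have "map (rr c1 c2) (map fst zs) = map (rr c1 c2) (map snd zs)"
    proof (rule nth_equalityI)
      fix j assume "j < length (map (rr c1 c2) (map fst zs))"
      then have "zs ! j \<in> S" using zs by auto
      then show "map (rr c1 c2) (map fst zs) ! j = map (rr c1 c2) (map snd zs) ! j"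
        using \<open>j < _\<close> unfolding S_def by (auto split: prod.splits)
    qed simp
    moreover have "map fst zs \<in> grid_pts n d" "map snd zs \<in> grid_pts n d"
      using zs unfolding grid_alt S_def by auto
    ultimately show "xy \<in> {(x,y). x \<in> grid_pts n d \<and> y \<in> grid_pts n d \<and> map (rr c1 c2) x = map (rr c1 c2) y}"
      using zs unfolding F_def by auto
  next
    fix xy assume "xy \<in> {(x,y). x \<in> grid_pts n d \<and> y \<in> grid_pts n d \<and> map (rr c1 c2) x = map (rr c1 c2) y}"
    then obtain x y where xy: "xy = (x,y)" "x \<in> grid_pts n d" "y \<in> grid_pts n d" "map (rr c1 c2) x = map (rr c1 c2) y"
      by auto
    have lx: "length x = d" "length y = d" using xy unfolding grid_alt by auto
    have "set (zip x y) \<subseteq> S"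
    proof
      fix z assume "z \<in> set (zip x y)"
      then obtain j where j: "j < d" "z = (x!j, y!j)" using lx by (auto simp: in_set_conv_nth)
      have "rr c1 c2 (x!j) = rr c1 c2 (y!j)" using xy(4) j lx by (metis nth_map)
      moreover have "x!j \<in> {1..int n}" "y!j \<in> {1..int n}" using xy j lx unfolding grid_alt by (auto simp: subset_iff)
      ultimately show "z \<in> S" unfolding S_def j by auto
    qed
    moreover have "F (zip x y) = xy" unfolding F_def xy using lx by simp
    moreover have "zip x y \<in> {zs. set zs \<subseteq> S \<and> length zs = d}" using lx calculation by simp
    ultimately show "xy \<in> F ` {zs. set zs \<subseteq> S \<and> length zs = d}"
      by (metis image_eqI)
  qed
  show ?thesis
  proof -
    have "card (F ` {zs. set zs \<subseteq> S \<and> length zs = d}) = card {zs. set zs \<subseteq> S \<and> length zs = d}"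
      by (rule card_image[OF inj])
    also have "\<dots> = card S ^ d" by (rule card_lists_length_eq[OF fin])
    finally show ?thesis unfolding img cS .
  qed
qed

lemma class_ineq:
  fixes al be m :: nat
  assumes "al + be \<le> m" "1 \<le> m"
  shows "4*al*be + (if m = 1 then 1 else 0) \<le> m*m"
proof (cases "m = 1")
  case True
  then have "al = 0 \<or> be = 0" using assms by linarith
  then show ?thesis using True by auto
next
  case False
  have "4*al*be \<le> (al+be)*(al+be)"
  proof -
    have h: "0 \<le> (int al - int be)*(int al - int be)" by simp
    have "int (4*al*be) \<le> int ((al+be)*(al+be))"
      using h by (simp add: algebra_simps)
    then show ?thesis by linarith
  qed
  also have "\<dots> \<le> m*m" using assms by (simp add: mult_le_mono)
  finally show ?thesis using False by simp
qed


lemma count_pairs: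
  assumes c: "1 \<le> c1" "c1 \<le> int n" "1 \<le> c2" "c2 \<le> int n" "c1 \<noteq> c2"
    and ab: "a \<noteq> b"
  shows "4 * card {(x,y). x \<in> grid_pts n d \<and> y \<in> grid_pts n d \<and> map (rr c1 c2) x = map (rr c1 c2) y \<and> G x = a \<and> G y = b} + (n-2)^d \<le> (n+2)^d"
proof -
  define r where "r = map (rr c1 c2)"
  define R where "R = r ` grid_pts n d"
  define cls where "cls \<rho> = {x \<in> grid_pts n d. r x = \<rho>}" for \<rho>
  define P where "P = {(x,y). x \<in> grid_pts n d \<and> y \<in> grid_pts n d \<and> r x = r y \<and> G x = a \<and> G y = b}"
  define C where "C = {(x,y). x \<in> grid_pts n d \<and> y \<in> grid_pts n d \<and> r x = r y}"
  define A where "A \<rho> = {x\<in>cls \<rho>. G x = a}" for \<rho>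
  define B where "B \<rho> = {x\<in>cls \<rho>. G x = b}" for \<rho>
  have finR: "finite R" unfolding R_def using finite_grid by simp
  have finc: "finite (cls \<rho>)" for \<rho> unfolding cls_def using finite_grid by simp
  have P_eq: "P = (\<Union>\<rho>\<in>R. A \<rho> \<times> B \<rho>)"
    unfolding P_def A_def B_def cls_def R_def by auto
  have C_eq: "C = (\<Union>\<rho>\<in>R. cls \<rho> \<times> cls \<rho>)"
    unfolding C_def cls_def R_def by auto
  have cardP: "card P = (\<Sum>\<rho>\<in>R. card (A \<rho>) * card (B \<rho>))"
  proof -
    have finA: "finite (A \<rho> \<times> B \<rho>)" for \<rho> unfolding A_def B_def using finc by simp
    have disj: "\<forall>i\<in>R. \<forall>j\<in>R. i \<noteq> j \<longrightarrow> A i \<times> B i \<inter> A j \<times> B j = {}"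
      by (auto simp: A_def B_def cls_def)
    show ?thesis unfolding P_eq card_UN_disjoint[OF finR ballI[OF finA] disj]
      by (simp add: card_cartesian_product)
  qed
  have cardC: "card C = (\<Sum>\<rho>\<in>R. card (cls \<rho>) * card (cls \<rho>))"
  proof -
    have finA: "finite (cls \<rho> \<times> cls \<rho>)" for \<rho> using finc by simp
    have disj: "\<forall>i\<in>R. \<forall>j\<in>R. i \<noteq> j \<longrightarrow> cls i \<times> cls i \<inter> cls j \<times> cls j = {}"
      by (auto simp: cls_def)
    show ?thesis unfolding C_eq card_UN_disjoint[OF finR ballI[OF finA] disj]
      by (simp add: card_cartesian_product)
  qed
  have C_val: "card C = (n+2)^d" unfolding C_def r_def using card_compat[OF c] by simp
  define T where "T = {x. set x \<subseteq> {1..int n} - {c1,c2} \<and> length x = d}"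
  have cardT: "card T = (n-2)^d"
  proof -
    have "card ({1..int n} - {c1,c2}) = n - 2"
      using c by (subst card_Diff_subset) auto
    then show ?thesis unfolding T_def by (simp add: card_lists_length_eq)
  qed
  have TR: "T \<subseteq> R" and Tc: "\<And>x. x \<in> T \<Longrightarrow> card (cls x) = 1"
  proof -
    have *: "x \<in> T \<Longrightarrow> x \<in> grid_pts n d \<and> r x = x" for x
      unfolding T_def grid_alt r_def rr_def by (auto intro!: map_idI)
    have **: "x \<in> T \<Longrightarrow> cls x = {x}" for x
    proof
      assume xT: "x \<in> T"
      show "cls x \<subseteq> {x}"
      proof
        fix y assume "y \<in> cls x"
        then have ry: "map (rr c1 c2) y = x" unfolding cls_def r_def by auto
        have "\<forall>z\<in>set y. rr c1 c2 z = z"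
        proof
          fix z assume "z \<in> set y"
          then have "rr c1 c2 z \<in> set x" using ry by auto
          then have "rr c1 c2 z \<noteq> c1" using xT unfolding T_def by auto
          then show "rr c1 c2 z = z" unfolding rr_def by auto
        qed
        then have "y = x" using ry map_idI by metis
        then show "y \<in> {x}" by simp
      qed
      show "{x} \<subseteq> cls x" using *[OF xT] unfolding cls_def by auto
    qed
    show "T \<subseteq> R" unfolding R_def using * by (metis image_eqI subsetI)
    show "\<And>x. x \<in> T \<Longrightarrow> card (cls x) = 1" using ** by simp
  qed
  have ind: "card T \<le> (\<Sum>\<rho>\<in>R. (if card (cls \<rho>) = 1 then 1 else 0))"
  proof -
    have "card T = (\<Sum>\<rho>\<in>T. (if card (cls \<rho>) = 1 then 1 else 0))" using Tc by simp
    also have "\<dots> \<le> (\<Sum>\<rho>\<in>R. (if card (cls \<rho>) = 1 then 1 else 0))"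
      by (rule sum_mono2[OF finR TR]) simp
    finally show ?thesis .
  qed
  have each: "\<rho> \<in> R \<Longrightarrow> 4 * (card (A \<rho>) * card (B \<rho>)) + (if card (cls \<rho>) = 1 then 1 else 0) \<le> card (cls \<rho>) * card (cls \<rho>)" for \<rho>
  proof -
    assume "\<rho> \<in> R"
    then have "cls \<rho> \<noteq> {}" unfolding R_def cls_def by auto
    then have m1: "1 \<le> card (cls \<rho>)" using finc by (simp add: Suc_leI card_gt_0_iff)
    have "A \<rho> \<union> B \<rho> \<subseteq> cls \<rho>" "A \<rho> \<inter> B \<rho> = {}" unfolding A_def B_def using ab by auto
    then have "card (A \<rho>) + card (B \<rho>) \<le> card (cls \<rho>)"
      by (metis card_Un_disjoint card_mono finc finite_subset le_sup_iff)
    from class_ineq[OF this m1] show ?thesis by (simp add: mult.assoc)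
  qed
  have "4 * card P + card T \<le> (\<Sum>\<rho>\<in>R. 4 * (card (A \<rho>) * card (B \<rho>))) + (\<Sum>\<rho>\<in>R. (if card (cls \<rho>) = 1 then 1 else 0))"
    using ind cardP by (simp add: sum_distrib_left)
  also have "\<dots> = (\<Sum>\<rho>\<in>R. 4 * (card (A \<rho>) * card (B \<rho>)) + (if card (cls \<rho>) = 1 then 1 else 0))"
    by (simp add: sum.distrib)
  also have "\<dots> \<le> (\<Sum>\<rho>\<in>R. card (cls \<rho>) * card (cls \<rho>))"
    by (rule sum_mono) (rule each)
  also have "\<dots> = (n+2)^d" using cardC C_val by simp
  finally show ?thesis unfolding P_def cardT r_def .
qed



lemma length_shift: "length (shift p v t) = min (length p) (length v)"
  unfolding shift_def by simp

lemma nth_shift: "j < length p \<Longrightarrow> j < length v \<Longrightarrow> shift p v t ! j = p!j + t * v!j"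
  unfolding shift_def by simp

lemma lp_facts:
  assumes lp: "line_pair n d p v" and n: "1 \<le> n"
  shows "length p = d" "length v = d"
    "\<And>j. j < d \<Longrightarrow> (v!j = -1 \<or> v!j = 0 \<or> v!j = 1) \<and> 1 \<le> p!j \<and> p!j \<le> int n \<and>
        1 \<le> p!j + (int n - 1) * v!j \<and> p!j + (int n - 1)*v!j \<le> int n"
proof -
  have pg: "p \<in> grid_pts n d" and dir: "is_dir d v" and e: "shift p v (int (n-1)) \<in> grid_pts n d"
    using lp unfolding line_pair_def by auto
  show lpd: "length p = d" using pg grid_nth by blast
  show lvd: "length v = d" using dir unfolding is_dir_def by blast
  fix j assume j: "j < d"
  have "v!j \<in> set v" using j lvd by simp
  then have "v!j = -1 \<or> v!j = 0 \<or> v!j = 1" using dir unfolding is_dir_def by blast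
  moreover have "1 \<le> p!j \<and> p!j \<le> int n" using pg j grid_nth by blast
  moreover have "1 \<le> shift p v (int (n-1)) ! j \<and> shift p v (int (n-1)) ! j \<le> int n" using e j grid_nth by blast
  moreover have "shift p v (int (n-1)) ! j = p!j + (int n - 1) * v!j"
    using j lpd lvd n by (simp add: nth_shift of_nat_diff)
  ultimately show "(v!j = -1 \<or> v!j = 0 \<or> v!j = 1) \<and> 1 \<le> p!j \<and> p!j \<le> int n \<and>
        1 \<le> p!j + (int n - 1) * v!j \<and> p!j + (int n - 1)*v!j \<le> int n" by simp
qed

lemma coord:
  fixes P V N I k :: int
  assumes V: "V = -1 \<or> V = 0 \<or> V = 1" and P: "1 \<le> P" "P \<le> N" "1 \<le> P + (N - 1) * V" "P + (N - 1) * V \<le> N"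
    and k: "k = N - 1 - 2 * I" "k \<noteq> 0"
  shows "rr (I + 1) (N - I) (P + I * V) = rr (I + 1) (N - I) (P + (N - 1 - I) * V)"
    "((P + (N - 1 - I) * V) - (P + I * V)) div k = V"
    "((P + I * V) - (P + (N - 1 - I) * V)) div k = - V"
    "(P + (N - 1 - I) * V) - I * (- V) = P + (N - 1) * V"
proof -
  have d1: "(P + (N - 1 - I) * V) - (P + I * V) = k * V" unfolding k(1) by (simp add: algebra_simps)
  have d2: "(P + I * V) - (P + (N - 1 - I) * V) = k * (- V)" unfolding k(1) by (simp add: algebra_simps)
  show "((P + (N - 1 - I) * V) - (P + I * V)) div k = V" using d1 k by simp
  show "((P + I * V) - (P + (N - 1 - I) * V)) div k = - V" using d2 k by (simp del: mult_minus_right)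
  show "(P + (N - 1 - I) * V) - I * (- V) = P + (N - 1) * V" by (simp add: algebra_simps)
  have "N - I \<noteq> I + 1" using k by simp
  then show "rr (I + 1) (N - I) (P + I * V) = rr (I + 1) (N - I) (P + (N - 1 - I) * V)"
    using V P unfolding rr_def by (auto simp: algebra_simps)
qed

definition UU :: "int \<Rightarrow> int list \<Rightarrow> int list \<Rightarrow> int list" where
  "UU k x y = map2 (\<lambda>a b. (b - a) div k) x y"

definition gline :: "nat \<Rightarrow> nat \<Rightarrow> int list \<times> int list \<Rightarrow> int list set" where
  "gline n i0 xy = (let k = int n - 1 - 2 * int i0; u = UU k (fst xy) (snd xy) in
      line_set n (map2 (\<lambda>a b. a - int i0 * b) (fst xy) u) u)"

lemma line_to_pair:
  assumes lp: "line_pair n d p v" and n: "2 \<le> n" and i0: "i0 < n" "i0 \<noteq> n - 1 - i0"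
  defines "x \<equiv> shift p v (int i0)" and "y \<equiv> shift p v (int (n - 1 - i0))"
  shows "x \<in> grid_pts n d" "y \<in> grid_pts n d"
    "map (rr (int i0 + 1) (int n - int i0)) x = map (rr (int i0 + 1) (int n - int i0)) y"
    "gline n i0 (x, y) = line_set n p v"
    "gline n i0 (y, x) = line_set n (shift p v (int (n-1))) (map uminus v)"
proof -
  show "x \<in> grid_pts n d"
    using lp i0 unfolding line_pair_def x_def by auto
  have "n - 1 - i0 \<le> n - 1" by simp
  then show "y \<in> grid_pts n d"
    using lp unfolding line_pair_def y_def by blast
  have lpd: "length p = d" and lvd: "length v = d" using lp_facts[OF lp] n by auto
  have F: "\<And>j. j < d \<Longrightarrow> (v!j = -1 \<or> v!j = 0 \<or> v!j = 1) \<and> 1 \<le> p!j \<and> p!j \<le> int n \<and>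
        1 \<le> p!j + (int n - 1) * v!j \<and> p!j + (int n - 1)*v!j \<le> int n"
    using lp_facts[OF lp] n by auto
  define k where "k = int n - 1 - 2 * int i0"
  have k0: "k \<noteq> 0" using i0 unfolding k_def by linarith
  have lx: "length x = d" "length y = d" unfolding x_def y_def using lpd lvd by (auto simp: length_shift)
  have xj: "\<And>j. j < d \<Longrightarrow> x!j = p!j + int i0 * v!j" unfolding x_def using lpd lvd by (simp add: nth_shift)
  have yj: "\<And>j. j < d \<Longrightarrow> y!j = p!j + (int n - 1 - int i0) * v!j"
    unfolding y_def using lpd lvd i0 by (simp add: nth_shift of_nat_diff)
  note C = coord[OF _ _ _ _ _ k_def k0]
  show "map (rr (int i0 + 1) (int n - int i0)) x = map (rr (int i0 + 1) (int n - int i0)) y"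
    by (rule nth_equalityI) (use lx xj yj F C(1) in auto)
  have c2: "(y!j - x!j) div k = v!j" if j: "j < d" for j
    unfolding xj[OF j] yj[OF j] by (rule C(2)) (use F[OF j] in auto)
  have c3: "(x!j - y!j) div k = - v!j" if j: "j < d" for j
    unfolding xj[OF j] yj[OF j] by (rule C(3)) (use F[OF j] in auto)
  have u1: "UU k x y = v"
    unfolding UU_def by (rule nth_equalityI) (use lx lvd c2 in auto)
  have u2: "UU k y x = map uminus v"
    unfolding UU_def by (rule nth_equalityI) (use lx lvd c3 in auto)
  have q1: "map2 (\<lambda>a b. a - int i0 * b) x v = p"
    by (rule nth_equalityI) (use lx lvd lpd xj in auto)
  have q2: "map2 (\<lambda>a b. a - int i0 * b) y (map uminus v) = shift p v (int (n-1))"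
    by (rule nth_equalityI) (use lx lvd lpd yj n in \<open>auto simp: length_shift nth_shift of_nat_diff algebra_simps\<close>)
  show "gline n i0 (x, y) = line_set n p v"
    unfolding gline_def Let_def k_def[symmetric] using u1 q1 by simp
  show "gline n i0 (y, x) = line_set n (shift p v (int (n-1))) (map uminus v)"
    unfolding gline_def Let_def k_def[symmetric] using u2 q2 by simp
qed

lemma line_set_rev:
  assumes "length p = length v" "1 \<le> n"
  shows "line_set n (shift p v (int (n-1))) (map uminus v) = line_set n p v"
proof -
  have e: "shift (shift p v (int (n-1))) (map uminus v) (int t) = shift p v (int (n - 1 - t))" if "t \<le> n - 1" for t
    by (rule nth_equalityI) (use assms that in \<open>auto simp: length_shift nth_shift of_nat_diff algebra_simps\<close>)
  show ?thesis
  proof (rule set_eqI, rule iffI)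
    fix z assume "z \<in> line_set n (shift p v (int (n-1))) (map uminus v)"
    then obtain t where "t \<le> n - 1" "z = shift (shift p v (int (n-1))) (map uminus v) (int t)"
      unfolding line_set_def by auto
    then show "z \<in> line_set n p v" using e unfolding line_set_def
      by (metis (mono_tags, lifting) diff_le_self mem_Collect_eq)
  next
    fix z assume "z \<in> line_set n p v"
    then obtain t where t: "t \<le> n - 1" "z = shift p v (int t)"
      unfolding line_set_def by auto
    have tt: "n - 1 - (n - 1 - t) = t" using t(1) by simp
    have "z = shift (shift p v (int (n-1))) (map uminus v) (int (n - 1 - t))"
      using e[of "n - 1 - t"] unfolding tt t(2) by simp
    then show "z \<in> line_set n (shift p v (int (n-1))) (map uminus v)" unfolding line_set_def
      by (metis (mono_tags, lifting) diff_le_self mem_Collect_eq)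
  qed
qed



lemma f_grid_le:
  assumes n: "2 \<le> length w" and i0: "i0 < length w" "w!i0 \<noteq> w!(length w - 1 - i0)"
  shows "f_grid w d G \<le> card {(x,y). x \<in> grid_pts (length w) d \<and> y \<in> grid_pts (length w) d \<and>
     map (rr (int i0 + 1) (int (length w) - int i0)) x = map (rr (int i0 + 1) (int (length w) - int i0)) y \<and>
     G x = w!i0 \<and> G y = w!(length w - 1 - i0)}" (is "_ \<le> card ?P")
proof -
  let ?n = "length w"
  have ii: "i0 \<noteq> ?n - 1 - i0"
  proof
    assume h: "i0 = ?n - 1 - i0"
    from i0(2) show False by (subst (asm) h[symmetric]) simp
  qed
  have finP: "finite ?P"
    by (rule finite_subset[of _ "grid_pts ?n d \<times> grid_pts ?n d"]) (auto simp: finite_grid)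
  have sub: "{L. is_line ?n d L \<and> line_contains ?n d G w L} \<subseteq> gline ?n i0 ` ?P"
  proof
    fix L assume "L \<in> {L. is_line ?n d L \<and> line_contains ?n d G w L}"
    then obtain p v where lp: "line_pair ?n d p v" and L: "L = line_set ?n p v"
      and rd: "(\<forall>i<?n. G (shift p v (int i)) = w ! i) \<or> (\<forall>i<?n. G (shift p v (int (?n - 1 - i))) = w ! i)"
      unfolding line_contains_def by auto
    note T = line_to_pair[OF lp n i0(1) ii]
    have lpv: "length p = length v" using lp_facts[OF lp] n by simp
    from rd show "L \<in> gline ?n i0 ` ?P"
    proof
      assume fw: "\<forall>i<?n. G (shift p v (int i)) = w ! i"
      have "?n - 1 - i0 < ?n" using n by simp
      then have g2: "G (shift p v (int (?n - 1 - i0))) = w!(?n - 1 - i0)" using fw by blast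
      have g1: "G (shift p v (int i0)) = w!i0" using fw i0 by blast
      have "(shift p v (int i0), shift p v (int (?n - 1 - i0))) \<in> ?P"
        unfolding mem_Collect_eq prod.case using T(1,2,3) g1 g2 by blast
      moreover have "gline ?n i0 (shift p v (int i0), shift p v (int (?n - 1 - i0))) = L"
        using T(4) L by simp
      ultimately show ?thesis by (rule rev_image_eqI[OF _ sym])
    next
      assume bw: "\<forall>i<?n. G (shift p v (int (?n - 1 - i))) = w ! i"
      have e: "?n - 1 - (?n - 1 - i0) = i0" using i0 by simp
      have "G (shift p v (int (?n - 1 - i0))) = w!i0" using bw i0 by blast
      moreover have "G (shift p v (int i0)) = w!(?n - 1 - i0)"
        using bw[rule_format, of "?n - 1 - i0"] n unfolding e by simp
      ultimately have "(shift p v (int (?n - 1 - i0)), shift p v (int i0)) \<in> ?P"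
        unfolding mem_Collect_eq prod.case using T(1,2,3) by metis
      moreover have "gline ?n i0 (shift p v (int (?n - 1 - i0)), shift p v (int i0)) = L"
        using T(5) L line_set_rev[OF lpv] n by simp
      ultimately show ?thesis by (rule rev_image_eqI[OF _ sym])
    qed
  qed
  have "f_grid w d G \<le> card (gline ?n i0 ` ?P)"
    unfolding f_grid_def by (rule card_mono[OF finite_imageI[OF finP] sub])
  also have "\<dots> \<le> card ?P" by (rule card_image_le[OF finP])
  finally show ?thesis .
qed


theorem lemma17:
  fixes w :: "'a list" and d :: nat
  assumes "length w \<ge> 2"
    and "\<exists>i < length w. w ! i \<noteq> w ! (length w - 1 - i)"
    and "d \<ge> 1"
  shows "real (f_max w d) \<le> ((real (length w) + 2) ^ d - (real (length w) - 2) ^ d) / 4"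
proof -
  let ?n = "length w"
  obtain i0 where i0: "i0 < ?n" "w!i0 \<noteq> w!(?n - 1 - i0)" using assms(2) by blast
  have ii: "i0 \<noteq> ?n - 1 - i0"
  proof
    assume h: "i0 = ?n - 1 - i0"
    from i0(2) show False by (subst (asm) h[symmetric]) simp
  qed
  have c: "1 \<le> int i0 + 1" "int i0 + 1 \<le> int ?n" "1 \<le> int ?n - int i0" "int ?n - int i0 \<le> int ?n"
    "int i0 + 1 \<noteq> int ?n - int i0"
    using i0(1) ii by linarith+
  define B where "B = ((?n+2)^d - (?n-2)^d) div 4"
  have each: "4 * f_grid w d G + (?n-2)^d \<le> (?n+2)^d" for G
  proof -
    have "4 * f_grid w d G \<le> 4 * card {(x,y). x \<in> grid_pts ?n d \<and> y \<in> grid_pts ?n d \<and>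
     map (rr (int i0 + 1) (int ?n - int i0)) x = map (rr (int i0 + 1) (int ?n - int i0)) y \<and>
     G x = w!i0 \<and> G y = w!(?n - 1 - i0)}"
      using f_grid_le[OF assms(1) i0] by simp
    then show ?thesis using count_pairs[OF c i0(2), of d G] by linarith
  qed
  have le: "f_max w d \<le> B"
    unfolding f_max_def
  proof (rule cSup_least)
    show "{f_grid w d G |G. True} \<noteq> {}" by auto
    fix x assume "x \<in> {f_grid w d G |G. True}"
    then obtain G where "x = f_grid w d G" by auto
    then show "x \<le> B" using each[of G] unfolding B_def by linarith
  qed
  have s: "(?n-2)^d \<le> (?n+2)^d" by (rule power_mono) auto
  have "4 * B \<le> (?n+2)^d - (?n-2)^d" unfolding B_def by linarith
  then have "4 * f_max w d \<le> (?n+2)^d - (?n-2)^d" using le by linarith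
  then have "real (4 * f_max w d) \<le> real ((?n+2)^d - (?n-2)^d)" by (rule of_nat_mono)
  also have "\<dots> = (real ?n + 2)^d - (real ?n - 2)^d"
    using s assms(1) by (simp add: of_nat_diff add.commute)
  finally show ?thesis by simp
qed

end
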